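(* Let $\mu$ be a probability measure on $\mathbb{C}$ with compact infinite support, with orthonormal polynomials $x_n(z;d\mu)$. Let $H$ be the convex hull of $\operatorname{supp}(\mu)$ and $D=\min_{w\in\mathbb{C}}\max_{z\in H}|z-w|$. For $z_0\in\mathbb{C}\setminus H$ let $d=\operatorname{dist}(z_0,H)$. Then for every $n\ge1$, $$|x_n(z_0;d\mu)|^2\ge\Bigl(\frac dD\Bigr)^2\Bigl(1+\Bigl(\frac dD\Bigr)^2\Bigr)^{n-1},$$ so $x_n(z_0)\ne0$ for all $n$ and $\liminf_{n\to\infty}|x_n(z_0;d\mu)|^{1/n}\ge(1+(d/D)^2)^{1/2}>1$.
   Context: $X_n$ denotes the monic polynomial of degree $n$ orthogonal in $L^2(\mathbb{C},\mu)$ to all polynomials of lower degree, and $x_n=X_n/\|X_n\|_{L^2(\mu)}$; $x_0=1$ since $\mu$ is a probability measure. *)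

theory Defs
  imports "HOL-Probability.Probability" "HOL-Computational_Algebra.Polynomial"
begin

definition msupp :: "complex measure \<Rightarrow> complex set" where
  "msupp M = {z. \<forall>e>0. emeasure M (ball z e) > 0}"

definition poly_ip :: "complex measure \<Rightarrow> complex poly \<Rightarrow> complex poly \<Rightarrow> complex" where
  "poly_ip M p q = integral\<^sup>L M (\<lambda>z. poly p z * cnj (poly q z))"

definition poly_L2norm :: "complex measure \<Rightarrow> complex poly \<Rightarrow> real" where
  "poly_L2norm M p = sqrt (integral\<^sup>L M (\<lambda>z. (cmod (poly p z))\<^sup>2))"

definition monic_OP :: "complex measure \<Rightarrow> nat \<Rightarrow> complex poly" where
  "monic_OP M n = (THE p. degree p = n \<and> lead_coeff p = 1 \<and>
                       (\<forall>q. degree q < n \<longrightarrow> poly_ip M p q = 0))"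

definition orthonormal_OP :: "complex measure \<Rightarrow> nat \<Rightarrow> complex \<Rightarrow> complex" where
  "orthonormal_OP M n z = poly (monic_OP M n) z / complex_of_real (poly_L2norm M (monic_OP M n))"

end

theory Submission
  imports Defs
begin


locale opm =
  fixes M :: "complex measure"
  assumes P: "prob_space M" and SB: "sets M = sets borel"
    and CS: "compact (msupp M)" and IS: "infinite (msupp M)"
begin

interpretation prob_space M by (rule P)

lemma space_M: "space M = UNIV"
  using sets_eq_imp_space_eq[OF SB] by simp

lemma meas_M: "f \<in> borel_measurable borel \<Longrightarrow> f \<in> borel_measurable M"
  using measurable_cong_sets[OF SB refl] by blast

lemma AE_S: "AE z in M. z \<in> msupp M"
proof -
  let ?F = "{ball z e | z e. e > 0 \<and> emeasure M (ball z e) = 0}"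
  obtain F' where F': "F' \<subseteq> ?F" "countable F'" "\<Union>F' = \<Union>?F"
    using Lindelof[of ?F] by auto
  have U: "\<Union>?F = - msupp M"
  proof
    show "\<Union>?F \<subseteq> - msupp M"
    proof
      fix x assume "x \<in> \<Union>?F"
      then obtain z e where ze: "e > 0" "emeasure M (ball z e) = 0" "x \<in> ball z e" by auto
      have sub: "ball x (e - dist z x) \<subseteq> ball z e"
        by (auto simp: ball_def) (metis dist_triangle add.commute less_diff_eq order_le_less_trans)
      have "emeasure M (ball x (e - dist z x)) \<le> emeasure M (ball z e)"
        by (rule emeasure_mono[OF sub]) (simp add: SB)
      then have "emeasure M (ball x (e - dist z x)) = 0" using ze by simp
      moreover have "e - dist z x > 0" using ze by simp
      ultimately have "\<not> (\<forall>e>0. emeasure M (ball x e) > 0)" by (metis less_irrefl)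
      then show "x \<in> - msupp M" unfolding msupp_def by simp
    qed
  next
    show "- msupp M \<subseteq> \<Union>?F"
    proof
      fix x assume "x \<in> - msupp M"
      then obtain e where "e > 0" "\<not> emeasure M (ball x e) > 0" unfolding msupp_def by auto
      then have "emeasure M (ball x e) = 0" by (simp add: not_gr_zero)
      then have "ball x e \<in> ?F" using \<open>e > 0\<close>
        by (intro CollectI exI[of _ x] exI[of _ e]) simp
      moreover have "x \<in> ball x e" using \<open>e > 0\<close> by simp
      ultimately show "x \<in> \<Union>?F" by (rule UnionI)
    qed
  qed
  have "(\<Union>B\<in>F'. B) \<in> null_sets M"
  proof (rule null_sets_UN')
    show "countable F'" by fact
    fix B assume "B \<in> F'"
    then obtain z e where "B = ball z e" "emeasure M (ball z e) = 0" using F' by auto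
    then show "B \<in> null_sets M" by (simp add: null_sets_def SB)
  qed
  then have "AE z in M. z \<notin> (\<Union>B\<in>F'. B)" by (rule AE_not_in)
  then show ?thesis using F'(3) U by auto
qed

lemma integrable_cont:
  fixes f :: "complex \<Rightarrow> 'b::{banach,second_countable_topology}"
  assumes "continuous_on UNIV f"
  shows "integrable M f"
proof -
  have "compact (f ` msupp M)"
    using compact_continuous_image[OF continuous_on_subset[OF assms] CS] by simp
  then obtain B where B: "\<forall>y\<in>f ` msupp M. norm y \<le> B"
    using compact_imp_bounded bounded_iff by metis
  have "AE z in M. norm (f z) \<le> B" using AE_S by eventually_elim (use B in auto)
  moreover have "f \<in> borel_measurable M"
    using meas_M borel_measurable_continuous_onI assms by blast
  ultimately show ?thesis by (rule integrable_const_bound)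
qed

lemma int_ip: "integrable M (\<lambda>z. poly p z * cnj (poly q z))"
  by (rule integrable_cont) (intro continuous_intros)

lemma int_sq: "integrable M (\<lambda>z. (cmod (poly p z))\<^sup>2)"
  by (rule integrable_cont) (intro continuous_intros)

definition NN :: "complex poly \<Rightarrow> real" where
  "NN p = integral\<^sup>L M (\<lambda>z. (cmod (poly p z))\<^sup>2)"

lemma ip_add: "poly_ip M (p + q) r = poly_ip M p r + poly_ip M q r"
  unfolding poly_ip_def
  by (simp add: distrib_right Bochner_Integration.integral_add[OF int_ip int_ip])

lemma ip_smult: "poly_ip M (smult a p) q = a * poly_ip M p q"
  unfolding poly_ip_def by (simp add: mult.assoc)

lemma ip_cnj: "poly_ip M q p = cnj (poly_ip M p q)"
proof -
  have "(\<lambda>z. poly q z * cnj (poly p z)) = (\<lambda>z. cnj (poly p z * cnj (poly q z)))"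
    by (auto simp: mult.commute)
  then show ?thesis unfolding poly_ip_def by (simp only: Bochner_Integration.integral_cnj)
qed

lemma ip_minus: "poly_ip M (- p) q = - poly_ip M p q"
  using ip_smult[of "-1" p q] by simp

lemma ip_diff: "poly_ip M (p - q) r = poly_ip M p r - poly_ip M q r"
  using ip_add[of p "-q" r] ip_minus[of q r] by simp

lemma ip_zero[simp]: "poly_ip M 0 q = 0"
  unfolding poly_ip_def by simp

lemma ip_zero2[simp]: "poly_ip M q 0 = 0"
  unfolding poly_ip_def by simp

lemma ip_sum: "poly_ip M (\<Sum>k\<in>A. f k) q = (\<Sum>k\<in>A. poly_ip M (f k) q)"
  by (induction A rule: infinite_finite_induct) (auto simp: ip_add)

lemma ip_add2: "poly_ip M r (p + q) = poly_ip M r p + poly_ip M r q"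
  by (subst (1 2 3) ip_cnj) (simp add: ip_add)

lemma ip_smult2: "poly_ip M q (smult a p) = cnj a * poly_ip M q p"
  by (subst (1 2) ip_cnj) (simp add: ip_smult)

lemma ip_diff2: "poly_ip M r (p - q) = poly_ip M r p - poly_ip M r q"
  by (subst (1 2 3) ip_cnj) (simp add: ip_diff)

lemma ip_sum2: "poly_ip M q (\<Sum>k\<in>A. f k) = (\<Sum>k\<in>A. poly_ip M q (f k))"
  by (subst ip_cnj) (simp add: ip_sum ip_cnj[of q])

lemma ip_self: "poly_ip M p p = complex_of_real (NN p)"
  unfolding poly_ip_def NN_def
  by (simp add: complex_norm_square[symmetric] del: of_real_power)

lemma NN_nonneg: "NN p \<ge> 0"
  unfolding NN_def by simp

lemma NN_zero:
  assumes "NN p = 0" shows "p = 0"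
proof (rule ccontr)
  assume p: "p \<noteq> 0"
  have "AE z in M. (cmod (poly p z))\<^sup>2 = 0"
    using assms int_sq[of p] integral_nonneg_eq_0_iff_AE[of M "\<lambda>z. (cmod (poly p z))\<^sup>2"]
    unfolding NN_def by simp
  then have AE0: "AE z in M. poly p z = 0" by simp
  have "finite {z. poly p z = 0}" using poly_roots_finite[OF p] .
  then obtain z where z: "z \<in> msupp M" "poly p z \<noteq> 0"
    using IS by (metis (mono_tags, lifting) finite_subset mem_Collect_eq subsetI)
  have "continuous (at z) (poly p)" by (intro continuous_intros)
  then have "open {y. poly p y \<noteq> 0}"
    by (intro open_Collect_neq continuous_intros)
  then obtain e where e: "e > 0" "ball z e \<subseteq> {y. poly p y \<noteq> 0}"
    using z(2) open_contains_ball by blast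
  have "AE y in M. y \<notin> ball z e" using AE0 by eventually_elim (use e in auto)
  then have "emeasure M {y \<in> space M. y \<in> ball z e} = 0"
    by (intro emeasure_eq_0_AE) simp
  then have "emeasure M (ball z e) = 0" by (simp add: space_M ball_def)
  then show False using z(1) e(1) unfolding msupp_def by auto
qed

end


context opm begin

fun G :: "nat \<Rightarrow> complex poly" where
  "G n = monom 1 n - (\<Sum>k<n. smult (poly_ip M (monom 1 n) (G k) / poly_ip M (G k) (G k)) (G k))"

declare G.simps[simp del]

lemma NN_pos: "p \<noteq> 0 \<Longrightarrow> NN p > 0"
  using NN_nonneg[of p] NN_zero[of p] by linarith

lemma ip_self_nz: "p \<noteq> 0 \<Longrightarrow> poly_ip M p p \<noteq> 0"
  using NN_pos[of p] by (simp add: ip_self)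

lemma G_props: "degree (G n) = n \<and> lead_coeff (G n) = 1 \<and> (\<forall>k<n. poly_ip M (G n) (G k) = 0)"
proof (induction n rule: less_induct)
  case (less n)
  define c where "c k = poly_ip M (monom 1 n) (G k) / poly_ip M (G k) (G k)" for k
  define R where "R = (\<Sum>k<n. smult (c k) (G k))"
  have Gn: "G n = monom 1 n - R" unfolding R_def c_def by (rule G.simps)
  have nz: "G k \<noteq> 0" if "k < n" for k
  proof
    assume "G k = 0" then have "lead_coeff (G k) = 0" by simp
    with less.IH[OF that] show False by simp
  qed
  have orth: "poly_ip M (G j) (G k) = 0" if "j < n" "k < n" "j \<noteq> k" for j k
  proof (cases "k < j")
    case True then show ?thesis using less.IH[OF that(1)] by blast
  next
    case False then have "j < k" using that by simp
    then have "poly_ip M (G k) (G j) = 0" using less.IH[OF that(2)] by blast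
    then show ?thesis by (subst ip_cnj) simp
  qed
  have degR: "degree R < n \<or> R = 0"
  proof (cases n)
    case 0 then show ?thesis by (simp add: R_def)
  next
    case (Suc m)
    have "degree R \<le> m" unfolding R_def
    proof (rule degree_sum_le)
      fix k assume "k \<in> {..<n}"
      then have "degree (G k) \<le> m" using less.IH[of k] Suc by auto
      then show "degree (smult (c k) (G k)) \<le> m" using degree_smult_le order_trans by blast
    qed simp
    then show ?thesis using Suc by simp
  qed
  have deg: "degree (G n) = n"
  proof (cases "R = 0")
    case True then show ?thesis by (simp add: Gn degree_monom_eq)
  next
    case False
    then have dR: "degree (- R) < degree (monom (1::complex) n)" using degR by (simp add: degree_monom_eq)
    have "degree (monom 1 n + (- R)) = degree (monom (1::complex) n)"
      by (rule degree_add_eq_left[OF dR])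
    then show ?thesis by (simp add: Gn degree_monom_eq)
  qed
  have lc: "lead_coeff (G n) = 1"
  proof -
    have "coeff R n = 0" using degR by (auto intro: coeff_eq_0)
    then show ?thesis using deg by (simp add: Gn)
  qed
  have "poly_ip M (G n) (G k) = 0" if k: "k < n" for k
  proof -
    have "poly_ip M (G n) (G k) = poly_ip M (monom 1 n) (G k) - (\<Sum>j<n. c j * poly_ip M (G j) (G k))"
      by (simp add: Gn R_def ip_diff ip_sum ip_smult)
    also have "(\<Sum>j<n. c j * poly_ip M (G j) (G k)) = c k * poly_ip M (G k) (G k)"
      by (rule sum.remove[THEN trans]) (use k orth in \<open>auto intro!: sum.neutral\<close>)
    also have "c k * poly_ip M (G k) (G k) = poly_ip M (monom 1 n) (G k)"
      unfolding c_def using ip_self_nz[OF nz[OF k]] by simp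
    finally show ?thesis by simp
  qed
  then show ?case using deg lc by blast
qed

lemma G_deg[simp]: "degree (G n) = n" and G_lc[simp]: "lead_coeff (G n) = 1"
  using G_props by blast+

lemma G_coeff[simp]: "coeff (G n) n = 1"
  using G_lc[of n] G_deg[of n] by (simp del: G_deg)

lemma G_nz: "G n \<noteq> 0"
  using G_lc[of n] by (metis leading_coeff_0_iff zero_neq_one)

lemma G_orth: "j \<noteq> k \<Longrightarrow> poly_ip M (G j) (G k) = 0"
proof (cases "k < j")
  case True then show ?thesis using G_props[of j] by blast
next
  case False assume "j \<noteq> k"
  then have "j < k" using False by simp
  then have "poly_ip M (G k) (G j) = 0" using G_props[of k] by blast
  then show ?thesis by (subst ip_cnj) simp
qed

lemma orth_span:
  assumes "\<forall>k<m. poly_ip M p (G k) = 0" "degree q < m"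
  shows "poly_ip M p q = 0"
  using assms
proof (induction m arbitrary: q)
  case 0 then show ?case by simp
next
  case (Suc m)
  define q' where "q' = q - smult (coeff q m) (G m)"
  have dq: "degree q \<le> m" using Suc.prems by simp
  have "degree q' \<le> m" unfolding q'_def
    by (rule degree_diff_le[OF dq]) (metis G_deg degree_smult_le)
  moreover have "coeff q' m = 0" unfolding q'_def using G_lc[of m] by simp
  ultimately have "q' = 0 \<or> degree q' < m"
    using leading_coeff_neq_0[of q'] le_neq_implies_less by fastforce
  then have "poly_ip M p q' = 0" using Suc by auto
  have eq: "q = q' + smult (coeff q m) (G m)" unfolding q'_def by simp
  have "poly_ip M p q = poly_ip M p q' + cnj (coeff q m) * poly_ip M p (G m)"
    by (subst eq) (simp only: ip_add2 ip_smult2)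
  then show ?case using Suc.prems(1) \<open>poly_ip M p q' = 0\<close> by simp
qed

lemma G_orth_low: "degree q < n \<Longrightarrow> poly_ip M (G n) q = 0"
  by (rule orth_span[of n]) (use G_props in auto)

lemma monic_OP_eq: "monic_OP M n = G n"
  unfolding monic_OP_def
proof (rule the_equality)
  show "degree (G n) = n \<and> lead_coeff (G n) = 1 \<and> (\<forall>q. degree q < n \<longrightarrow> poly_ip M (G n) q = 0)"
    by (intro conjI allI impI G_deg G_lc G_orth_low)
next
  fix p assume p: "degree p = n \<and> lead_coeff p = 1 \<and> (\<forall>q. degree q < n \<longrightarrow> poly_ip M p q = 0)"
  define r where "r = p - G n"
  show "p = G n"
  proof (rule ccontr)
    assume "p \<noteq> G n"
    then have r0: "r \<noteq> 0" unfolding r_def by simp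
    have "degree r \<le> n" unfolding r_def using p by (intro degree_diff_le) auto
    moreover have "coeff r n = 0"
    proof -
      from p have dp: "degree p = n" and lp: "lead_coeff p = 1" by blast+
      show ?thesis unfolding r_def using dp lp by simp
    qed
    ultimately have "degree r < n" using r0 leading_coeff_neq_0[of r] le_neq_implies_less by fastforce
    then have "poly_ip M r r = 0" unfolding r_def
      using p G_orth_low[of "p - G n" n] by (simp add: ip_diff)
    then show False using ip_self_nz[OF r0] by simp
  qed
qed

definition s :: "nat \<Rightarrow> real" where "s n = sqrt (NN (G n))"

lemma s_pos: "s n > 0"
  unfolding s_def using NN_pos[OF G_nz] by simp

definition e :: "nat \<Rightarrow> complex poly" where
  "e n = smult (1 / complex_of_real (s n)) (G n)"

lemma L2norm: "poly_L2norm M p = sqrt (NN p)"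
  unfolding poly_L2norm_def NN_def by simp

lemma x_eq: "orthonormal_OP M n z = poly (e n) z"
  unfolding orthonormal_OP_def monic_OP_eq e_def L2norm s_def by simp

lemma G_e: "G n = smult (complex_of_real (s n)) (e n)"
  unfolding e_def using s_pos[of n] by simp

lemma e_deg[simp]: "degree (e n) = n"
  unfolding e_def using s_pos[of n] by simp

lemma e_orth: "poly_ip M (e j) (e k) = (if j = k then 1 else 0)"
proof (cases "j = k")
  case True
  have N: "NN (G k) = (s k)\<^sup>2" unfolding s_def using NN_nonneg by simp
  have "poly_ip M (e k) (e k) = cnj (1 / of_real (s k)) * (1 / of_real (s k) * poly_ip M (G k) (G k))"
    by (simp only: e_def ip_smult ip_smult2)
  also have "\<dots> = 1" using s_pos[of k] by (simp add: ip_self N power2_eq_square)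
  finally show ?thesis using True by simp
next
  case False then show ?thesis by (simp add: e_def ip_smult ip_smult2 G_orth)
qed

lemma expansion:
  assumes "degree q \<le> n"
  shows "q = (\<Sum>k\<le>n. smult (poly_ip M q (e k)) (e k))"
proof -
  define r where "r = q - (\<Sum>k\<le>n. smult (poly_ip M q (e k)) (e k))"
  have "poly_ip M r (e j) = 0" if "j \<le> n" for j
    using that by (simp add: r_def ip_diff ip_sum ip_smult e_orth if_distrib sum.delta cong: if_cong)
  then have "\<forall>k<Suc n. poly_ip M r (G k) = 0"
    by (simp add: G_e ip_smult2)
  moreover have "degree r \<le> n" unfolding r_def
    by (intro degree_diff_le assms degree_sum_le) (auto intro: order_trans[OF degree_smult_le])
  then have "degree r < Suc n" by simp
  ultimately have "poly_ip M r r = 0" by (rule orth_span)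
  then have "r = 0" using ip_self_nz by blast
  then show ?thesis unfolding r_def by simp
qed

lemma cnj_mult_self: "cnj z * z = (complex_of_real (cmod z))\<^sup>2"
  by (metis complex_norm_square mult.commute of_real_power)

lemma parseval:
  assumes "finite A"
  shows "poly_ip M (\<Sum>k\<in>A. smult (c k) (e k)) (\<Sum>k\<in>A. smult (c k) (e k))
          = (\<Sum>k\<in>A. complex_of_real ((cmod (c k))\<^sup>2))"
  using assms
  by (simp add: ip_sum ip_sum2 ip_smult ip_smult2 e_orth if_distrib cnj_mult_self cong: if_cong)

end


context opm begin

definition Kf :: "complex \<Rightarrow> nat \<Rightarrow> real" where
  "Kf z0 n = (\<Sum>k\<le>n. (cmod (poly (e k) z0))\<^sup>2)"

lemma G0: "G 0 = 1"
  by (subst G.simps) (simp add: monom_0 one_pCons)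

lemma NN1: "NN 1 = 1"
proof -
  interpret prob_space M by (rule P)
  show ?thesis unfolding NN_def by (simp add: prob_space)
qed

lemma e0: "e 0 = 1"
  unfolding e_def s_def G0 NN1 by simp

lemma Kf0: "Kf z0 0 = 1"
  unfolding Kf_def by (simp add: e0)

lemma Kf_mono: "Kf z0 n \<le> Kf z0 (Suc n)"
  unfolding Kf_def by simp

lemma Kf_pos: "Kf z0 n \<ge> 1"
proof (induction n)
  case 0 then show ?case by (simp add: Kf0)
next
  case (Suc n) then show ?case using Kf_mono[of z0 n] by linarith
qed

lemma Kf_Suc: "Kf z0 (Suc n) = Kf z0 n + (cmod (poly (e (Suc n)) z0))\<^sup>2"
  unfolding Kf_def by simp

lemma key_step:
  fixes z0 w :: complex and r :: real
  assumes r: "r \<ge> 0" and ineq: "\<forall>z\<in>msupp M. (1 + r) * (cmod (z - w))\<^sup>2 \<le> (cmod (z0 - w))\<^sup>2"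
  shows "(1 + r) * Kf z0 n \<le> Kf z0 (Suc n)"
proof -
  have zw: "z0 \<noteq> w"
  proof
    assume "z0 = w"
    have "z = w" if z: "z \<in> msupp M" for z
    proof -
      define t where "t = (cmod (z - w))\<^sup>2"
      have "(1 + r) * t \<le> 0" using ineq z \<open>z0 = w\<close> unfolding t_def by simp
      then have "t + r * t \<le> 0" by (simp add: distrib_right)
      moreover have "r * t \<ge> 0" "t \<ge> 0" using r unfolding t_def by auto
      ultimately have "t = 0" by linarith
      then show "z = w" unfolding t_def by simp
    qed
    then have "\<forall>z\<in>msupp M. z = w" by blast
    then have "msupp M \<subseteq> {w}" by auto
    then show False using IS finite_subset by blast
  qed
  define xs where "xs k = cmod (poly (e k) z0)" for k
  define Kp where "Kp = (\<Sum>k\<le>n. smult (cnj (poly (e k) z0)) (e k))"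
  define Q where "Q = [:-w, 1:] * Kp"
  define b where "b k = poly_ip M Q (e k)" for k
  have polyQ: "poly Q z = (z - w) * poly Kp z" for z unfolding Q_def by (simp add: algebra_simps)
  have Kpz0: "poly Kp z0 = complex_of_real (Kf z0 n)"
    unfolding Kp_def Kf_def by (simp add: poly_sum cnj_mult_self)
  have degKp: "degree Kp \<le> n" unfolding Kp_def
    by (intro degree_sum_le) (auto intro: order_trans[OF degree_smult_le])
  have degQ: "degree Q \<le> Suc n" unfolding Q_def
    using degree_mult_le[of "[:-w, 1:]" Kp] degKp by simp
  have expQ: "Q = (\<Sum>k\<le>Suc n. smult (b k) (e k))" unfolding b_def by (rule expansion[OF degQ])
  have NNQ: "NN Q = (\<Sum>k\<le>Suc n. (cmod (b k))\<^sup>2)"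
  proof -
    have "complex_of_real (NN Q) = poly_ip M Q Q" by (simp add: ip_self)
    also have "\<dots> = (\<Sum>k\<le>Suc n. complex_of_real ((cmod (b k))\<^sup>2))"
      by (subst expQ, subst expQ, rule parseval) simp
    finally show ?thesis unfolding of_real_sum[symmetric] of_real_eq_iff .
  qed
  have NNKp: "NN Kp = Kf z0 n"
  proof -
    have "complex_of_real (NN Kp) = poly_ip M Kp Kp" by (simp add: ip_self)
    also have "\<dots> = (\<Sum>k\<le>n. complex_of_real ((cmod (cnj (poly (e k) z0)))\<^sup>2))"
      unfolding Kp_def by (rule parseval) simp
    finally show ?thesis unfolding Kf_def complex_mod_cnj of_real_sum[symmetric] of_real_eq_iff .
  qed
  have "cmod (poly Q z0) = cmod (\<Sum>k\<le>Suc n. b k * poly (e k) z0)"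
    by (subst expQ) (simp add: poly_sum)
  also have "\<dots> \<le> (\<Sum>k\<le>Suc n. cmod (b k) * xs k)"
    unfolding xs_def by (rule order_trans[OF norm_sum]) (simp add: norm_mult)
  finally have "(cmod (poly Q z0))\<^sup>2 \<le> (\<Sum>k\<le>Suc n. cmod (b k) * xs k)\<^sup>2"
    by (intro power_mono) auto
  also have "\<dots> \<le> (\<Sum>k\<le>Suc n. (cmod (b k))\<^sup>2) * (\<Sum>k\<le>Suc n. (xs k)\<^sup>2)"
    by (rule Cauchy_Schwarz_ineq_sum)
  also have "\<dots> = NN Q * Kf z0 (Suc n)" unfolding NNQ Kf_def xs_def ..
  finally have up: "(cmod (z0 - w))\<^sup>2 * (Kf z0 n)\<^sup>2 \<le> NN Q * Kf z0 (Suc n)"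
    by (simp add: polyQ Kpz0 norm_mult power_mult_distrib)
  define c where "c = (cmod (z0 - w))\<^sup>2 / (1 + r)"
  have "NN Q \<le> integral\<^sup>L M (\<lambda>z. c * (cmod (poly Kp z))\<^sup>2)"
    unfolding NN_def
  proof (rule integral_mono_AE)
    show "integrable M (\<lambda>z. (cmod (poly Q z))\<^sup>2)" by (rule int_sq)
    show "integrable M (\<lambda>z. c * (cmod (poly Kp z))\<^sup>2)" using int_sq by simp
    show "AE z in M. (cmod (poly Q z))\<^sup>2 \<le> c * (cmod (poly Kp z))\<^sup>2"
      using AE_S
    proof eventually_elim
      case (elim z)
      have "(cmod (z - w))\<^sup>2 \<le> c" unfolding c_def using ineq elim r
        by (simp add: pos_le_divide_eq mult.commute)
      then show ?case unfolding polyQ norm_mult power_mult_distrib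
        by (intro mult_right_mono) auto
    qed
  qed
  also have "\<dots> = c * NN Kp" unfolding NN_def by simp
  finally have "NN Q \<le> c * Kf z0 n" using NNKp by simp
  then have "NN Q * Kf z0 (Suc n) \<le> c * Kf z0 n * Kf z0 (Suc n)"
    using Kf_pos[of z0 "Suc n"] by (intro mult_right_mono) auto
  with up have A: "(cmod (z0 - w))\<^sup>2 * (Kf z0 n)\<^sup>2 \<le> c * Kf z0 n * Kf z0 (Suc n)" by linarith
  have pos: "(cmod (z0 - w))\<^sup>2 > 0" "Kf z0 n > 0" using zw Kf_pos[of z0 n] by auto
  define a where "a = (cmod (z0 - w))\<^sup>2"
  define K where "K = Kf z0 n"
  define K' where "K' = Kf z0 (Suc n)"
  have r1: "1 + r > 0" using r by simp
  from A have "(1 + r) * (a * K\<^sup>2) \<le> (1 + r) * (a / (1 + r) * K * K')"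
    unfolding a_def K_def K'_def c_def by (rule mult_left_mono) (use r in simp)
  also have "\<dots> = a * K * K'" using r1 by simp
  finally have "(a * K) * ((1 + r) * K) \<le> (a * K) * K'" by (simp add: power2_eq_square algebra_simps)
  moreover have "a * K > 0" using pos unfolding a_def K_def by simp
  ultimately show ?thesis unfolding K_def K'_def by (simp add: mult_le_cancel_left_pos)
qed

end


lemma geo_real:
  fixes P Qn \<alpha> \<beta> d2 D2 t :: real
  assumes d2: "d2 > 0" and D2: "D2 > 0" and P: "P \<le> D2" and b: "\<beta> \<le> \<alpha> - d2"
    and CS: "\<alpha>\<^sup>2 \<le> d2 * Qn" and t: "t = D2 / d2"
  shows "(1 + d2 / D2) * (P + 2 * t * \<beta> + t\<^sup>2 * d2) \<le> Qn + 2 * t * \<alpha> + t\<^sup>2 * d2"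
proof -
  have t0: "t \<ge> 0" using t d2 D2 by simp
  have "2 * t * \<beta> \<le> 2 * t * (\<alpha> - d2)" using t0 b by (simp add: mult_left_mono)
  then have "P + 2 * t * \<beta> + t\<^sup>2 * d2 \<le> D2 + 2 * t * (\<alpha> - d2) + t\<^sup>2 * d2" using P by linarith
  moreover have "1 + d2 / D2 > 0" using d2 D2 by (simp add: add_pos_pos)
  ultimately have 1: "(1 + d2 / D2) * (P + 2 * t * \<beta> + t\<^sup>2 * d2)
      \<le> (1 + d2 / D2) * (D2 + 2 * t * (\<alpha> - d2) + t\<^sup>2 * d2)" by (simp add: mult_left_mono)
  have id: "(1 + d2 / D2) * (D2 + 2 * t * (\<alpha> - d2) + t\<^sup>2 * d2)
      = \<alpha>\<^sup>2 / d2 + 2 * t * \<alpha> + t\<^sup>2 * d2 - (\<alpha> - d2)\<^sup>2 / d2"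
    using d2 D2 unfolding t by (simp add: field_simps power2_eq_square)
  have "\<alpha>\<^sup>2 / d2 \<le> Qn" using CS d2 by (simp add: pos_divide_le_eq mult.commute)
  moreover have "(\<alpha> - d2)\<^sup>2 / d2 \<ge> 0" using d2 by simp
  ultimately show ?thesis using 1 id by linarith
qed

lemma geo:
  fixes z z0 c w0 :: complex and Dp :: real
  assumes Dp: "Dp > 0" and v0: "z0 \<noteq> w0"
    and zc: "cmod (z - c) \<le> Dp"
    and inn: "inner (z0 - w0) (z - w0) \<le> 0"
  defines "w \<equiv> c - complex_of_real (Dp\<^sup>2 / (cmod (z0 - w0))\<^sup>2) * (z0 - w0)"
  shows "(1 + (cmod (z0 - w0) / Dp)\<^sup>2) * (cmod (z - w))\<^sup>2 \<le> (cmod (z0 - w))\<^sup>2"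
proof -
  define v where "v = z0 - w0"
  define p where "p = z - c"
  define q where "q = z0 - c"
  define t where "t = Dp\<^sup>2 / (cmod v)\<^sup>2"
  define d2 where "d2 = (Re v)\<^sup>2 + (Im v)\<^sup>2"
  define P where "P = (Re p)\<^sup>2 + (Im p)\<^sup>2"
  define Qn where "Qn = (Re q)\<^sup>2 + (Im q)\<^sup>2"
  define \<alpha> where "\<alpha> = Re v * Re q + Im v * Im q"
  define \<beta> where "\<beta> = Re v * Re p + Im v * Im p"
  have d2c: "(cmod v)\<^sup>2 = d2" unfolding d2_def by (simp add: cmod_power2)
  have "v \<noteq> 0" using v0 unfolding v_def by simp
  then have "(cmod v)\<^sup>2 > 0" by simp
  then have d2pos: "d2 > 0" using d2c by simp
  have "(cmod p)\<^sup>2 \<le> Dp\<^sup>2" using zc unfolding p_def by (intro power_mono) auto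
  then have "P \<le> Dp\<^sup>2" unfolding P_def cmod_power2 .
  moreover have "\<beta> \<le> \<alpha> - d2"
  proof -
    have "inner v (p - q + v) = inner (z0 - w0) (z - w0)"
      unfolding p_def q_def v_def by (rule arg_cong[where f="inner (z0 - w0)"]) simp
    then have "inner v (p - q + v) \<le> 0" using inn by simp
    then show ?thesis unfolding \<alpha>_def \<beta>_def d2_def inner_complex_def
      by (simp add: algebra_simps power2_eq_square)
  qed
  moreover have "\<alpha>\<^sup>2 \<le> d2 * Qn"
  proof -
    have "d2 * Qn - \<alpha>\<^sup>2 = (Re v * Im q - Im v * Re q)\<^sup>2"
      unfolding d2_def Qn_def \<alpha>_def by (simp add: power2_eq_square algebra_simps)
    then show ?thesis using zero_le_power2[of "Re v * Im q - Im v * Re q"] by linarith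
  qed
  moreover have "t = Dp\<^sup>2 / d2" unfolding t_def d2c ..
  ultimately have main: "(1 + d2 / Dp\<^sup>2) * (P + 2 * t * \<beta> + t\<^sup>2 * d2) \<le> Qn + 2 * t * \<alpha> + t\<^sup>2 * d2"
    using d2pos Dp by (intro geo_real) auto
  have wv: "w = c - complex_of_real t * v" unfolding w_def t_def v_def ..
  have e1: "(cmod (z - w))\<^sup>2 = P + 2 * t * \<beta> + t\<^sup>2 * d2"
  proof -
    have "z - w = p + complex_of_real t * v" unfolding wv p_def by simp
    then show ?thesis unfolding P_def \<beta>_def d2_def cmod_power2
      by (simp add: power2_eq_square algebra_simps)
  qed
  have e2: "(cmod (z0 - w))\<^sup>2 = Qn + 2 * t * \<alpha> + t\<^sup>2 * d2"
  proof -
    have "z0 - w = q + complex_of_real t * v" unfolding wv q_def by simp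
    then show ?thesis unfolding Qn_def \<alpha>_def d2_def cmod_power2
      by (simp add: power2_eq_square algebra_simps)
  qed
  have "(cmod (z0 - w0) / Dp)\<^sup>2 = d2 / Dp\<^sup>2"
    using d2c unfolding v_def by (simp add: power_divide)
  then show ?thesis using main e1 e2 by simp
qed



lemma liminf_part:
  fixes x :: "nat \<Rightarrow> complex" and a b :: real
  assumes a: "a > 0" and b: "b > 0"
    and bound: "\<And>n. n \<ge> 1 \<Longrightarrow> cmod (x n) \<ge> a * b ^ (n - 1)"
  shows "liminf (\<lambda>n. ereal (cmod (x n) powr (1 / real n))) \<ge> ereal b"
proof -
  define f where "f n = a powr (1 / real n) * b powr (1 - 1 / real n)" for n
  have lim: "f \<longlonglongrightarrow> b"
  proof -
    have "(\<lambda>n. a powr (1 / real n) * b powr (1 - 1 / real n)) \<longlonglongrightarrow> a powr 0 * b powr (1 - 0)"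
      using a b by (intro tendsto_intros lim_inverse_n') auto
    then show ?thesis unfolding f_def using a b by simp
  qed
  have ev: "eventually (\<lambda>n. ereal (f n) \<le> ereal (cmod (x n) powr (1 / real n))) sequentially"
    unfolding eventually_sequentially
  proof (intro exI allI impI)
    fix n :: nat assume n: "n \<ge> 1"
    have pos: "a * b ^ (n - 1) > 0" using a b by simp
    have "(a * b ^ (n - 1)) powr (1 / real n) \<le> cmod (x n) powr (1 / real n)"
      using bound[OF n] pos by (intro powr_mono2) auto
    moreover have "(a * b ^ (n - 1)) powr (1 / real n) = f n"
    proof -
      have "(a * b ^ (n - 1)) powr (1 / real n) = a powr (1 / real n) * (b ^ (n - 1)) powr (1 / real n)"
        using a b by (simp add: powr_mult)
      also have "(b ^ (n - 1)) powr (1 / real n) = b powr (real (n - 1) * (1 / real n))"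
        using b by (simp add: powr_realpow[symmetric] powr_powr)
      also have "real (n - 1) * (1 / real n) = 1 - 1 / real n"
        using n by (simp add: of_nat_diff field_simps)
      finally show ?thesis unfolding f_def .
    qed
    ultimately show "ereal (f n) \<le> ereal (cmod (x n) powr (1 / real n))" by simp
  qed
  have "ereal b = liminf (\<lambda>n. ereal (f n))"
    using lim by (intro lim_imp_Liminf[symmetric]) auto
  also have "\<dots> \<le> liminf (\<lambda>n. ereal (cmod (x n) powr (1 / real n)))"
    by (rule Liminf_mono[OF ev])
  finally show ?thesis .
qed

theorem proposition3p3:
  fixes M :: "complex measure" and z0 :: complex
  assumes "prob_space M"
    and "sets M = sets borel"
    and "compact (msupp M)"
    and "infinite (msupp M)"
    and "z0 \<notin> convex hull (msupp M)"
  defines "H \<equiv> convex hull (msupp M)"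
  defines "D \<equiv> (INF w. SUP z\<in>H. cmod (z - w))"
  defines "d \<equiv> infdist z0 H"
  shows "(\<forall>n\<ge>1. (cmod (orthonormal_OP M n z0))\<^sup>2 \<ge> (d / D)\<^sup>2 * (1 + (d / D)\<^sup>2) ^ (n - 1))
       \<and> (\<forall>n. orthonormal_OP M n z0 \<noteq> 0)
       \<and> liminf (\<lambda>n. ereal (cmod (orthonormal_OP M n z0) powr (1 / real n)))
            \<ge> ereal (sqrt (1 + (d / D)\<^sup>2))
       \<and> sqrt (1 + (d / D)\<^sup>2) > 1"
proof -
  interpret P: prob_space M by (rule assms(1))
  interpret opm M
    by unfold_locales (use assms(1-4) P.sigma_finite_countable P.emeasure_space_1 in auto)
  let ?S = "msupp M"
  have Hc: "compact H" unfolding H_def using compact_convex_hull assms(3) by blast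
  then have Hcl: "closed H" by (rule compact_imp_closed)
  have Hcv: "convex H" unfolding H_def by (rule convex_convex_hull)
  have SH: "?S \<subseteq> H" unfolding H_def by (rule hull_subset)
  obtain z1 where z1: "z1 \<in> ?S" using assms(4) by (metis ex_in_conv finite.emptyI)
  have "infinite (?S - {z1})" using assms(4) by (rule infinite_remove)
  then obtain z2 where z2: "z2 \<in> ?S" "z2 \<noteq> z1" by (metis Diff_iff ex_in_conv finite.emptyI insertI1)
  have Hne: "H \<noteq> {}" using z1 SH by blast
  have z0H: "z0 \<notin> H" using assms(5) unfolding H_def .
  have dpos: "d > 0"
  proof -
    have "d \<ge> 0" unfolding d_def by (rule infdist_nonneg)
    moreover have "d \<noteq> 0" using in_closed_iff_infdist_zero[OF Hcl Hne, of z0] z0H unfolding d_def by simp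
    ultimately show ?thesis by simp
  qed
  have bdd: "bdd_above ((\<lambda>z. cmod (z - w)) ` H)" for w
  proof -
    have "compact ((\<lambda>z. cmod (z - w)) ` H)"
      by (rule compact_continuous_image[OF _ Hc]) (intro continuous_intros)
    then show ?thesis by (intro bounded_imp_bdd_above compact_imp_bounded)
  qed
  have Dpos: "D > 0"
  proof -
    have "cmod (z1 - z2) / 2 \<le> D" unfolding D_def
    proof (rule cINF_greatest)
      fix w
      have "cmod (z1 - w) \<le> (SUP z\<in>H. cmod (z - w))" using z1 SH by (intro cSUP_upper bdd) auto
      moreover have "cmod (z2 - w) \<le> (SUP z\<in>H. cmod (z - w))" using z2 SH by (intro cSUP_upper bdd) auto
      moreover have "cmod (z1 - z2) \<le> cmod (z1 - w) + cmod (z2 - w)"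
        using norm_triangle_ineq4[of "z1 - w" "z2 - w"] by simp
      ultimately show "cmod (z1 - z2) / 2 \<le> (SUP z\<in>H. cmod (z - w))" by linarith
    qed simp
    moreover have "cmod (z1 - z2) > 0" using z2 by simp
    ultimately show ?thesis by linarith
  qed
  define w0 where "w0 = closest_point H z0"
  have w0H: "w0 \<in> H" unfolding w0_def by (rule closest_point_in_set[OF Hcl Hne])
  have z0w0: "z0 \<noteq> w0" using w0H z0H by auto
  have dd0: "d \<le> cmod (z0 - w0)" unfolding d_def using infdist_le[OF w0H, of z0] by (simp add: dist_norm)
  have inn: "inner (z0 - w0) (z - w0) \<le> 0" if "z \<in> H" for z
    unfolding w0_def by (rule closest_point_dot[OF Hcv Hcl that])
  have stepDp: "(1 + (d / Dp)\<^sup>2) * Kf z0 n \<le> Kf z0 (Suc n)" if Dp: "Dp > D" for Dp n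
  proof -
    have Dp0: "Dp > 0" using Dp Dpos by simp
    have "Inf (range (\<lambda>w. SUP z\<in>H. cmod (z - w))) < Dp" using Dp unfolding D_def by simp
    then obtain c where c: "(SUP z\<in>H. cmod (z - c)) < Dp" using cInf_lessD[of "range (\<lambda>w. SUP z\<in>H. cmod (z - w))" Dp] by auto
    define w where "w = c - complex_of_real (Dp\<^sup>2 / (cmod (z0 - w0))\<^sup>2) * (z0 - w0)"
    have "\<forall>z\<in>?S. (1 + (d / Dp)\<^sup>2) * (cmod (z - w))\<^sup>2 \<le> (cmod (z0 - w))\<^sup>2"
    proof
      fix z assume z: "z \<in> ?S"
      then have zH: "z \<in> H" using SH by blast
      have zc: "cmod (z - c) \<le> Dp" using cSUP_upper[OF zH bdd[of c]] c by simp
      have g: "(1 + (cmod (z0 - w0) / Dp)\<^sup>2) * (cmod (z - w))\<^sup>2 \<le> (cmod (z0 - w))\<^sup>2"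
        unfolding w_def by (rule geo[OF Dp0 z0w0 zc inn[OF zH]])
      have "(d / Dp)\<^sup>2 \<le> (cmod (z0 - w0) / Dp)\<^sup>2"
        using dd0 dpos Dp0 by (intro power_mono divide_right_mono) auto
      then have "(1 + (d / Dp)\<^sup>2) * (cmod (z - w))\<^sup>2 \<le> (1 + (cmod (z0 - w0) / Dp)\<^sup>2) * (cmod (z - w))\<^sup>2"
        by (intro mult_right_mono) auto
      then show "(1 + (d / Dp)\<^sup>2) * (cmod (z - w))\<^sup>2 \<le> (cmod (z0 - w))\<^sup>2" using g by linarith
    qed
    then show ?thesis by (intro key_step) auto
  qed
  define r where "r = (d / D)\<^sup>2"
  have rpos: "r > 0" unfolding r_def using dpos Dpos by simp
  have step: "(1 + r) * Kf z0 n \<le> Kf z0 (Suc n)" for n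
  proof -
    have "((\<lambda>Dp. (1 + (d / Dp)\<^sup>2) * Kf z0 n) \<longlongrightarrow> (1 + (d / D)\<^sup>2) * Kf z0 n) (at_right D)"
      using Dpos by (intro tendsto_intros) auto
    moreover have "eventually (\<lambda>Dp. (1 + (d / Dp)\<^sup>2) * Kf z0 n \<le> Kf z0 (Suc n)) (at_right D)"
      using eventually_at_right_less[of D] by eventually_elim (rule stepDp)
    ultimately have "(1 + (d / D)\<^sup>2) * Kf z0 n \<le> Kf z0 (Suc n)"
      by (intro tendsto_le[of "at_right D" "\<lambda>_. Kf z0 (Suc n)"]) auto
    then show ?thesis unfolding r_def .
  qed
  have Kgrow: "Kf z0 n \<ge> (1 + r) ^ n" for n
  proof (induction n)
    case 0 then show ?case by (simp add: Kf0)
  next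
    case (Suc n)
    have "(1 + r) ^ Suc n = (1 + r) * (1 + r) ^ n" by simp
    also have "\<dots> \<le> (1 + r) * Kf z0 n" using Suc rpos by (intro mult_left_mono) auto
    also have "\<dots> \<le> Kf z0 (Suc n)" by (rule step)
    finally show ?case .
  qed
  have bound: "(cmod (orthonormal_OP M n z0))\<^sup>2 \<ge> r * (1 + r) ^ (n - 1)" if n: "n \<ge> 1" for n
  proof -
    obtain m where m: "n = Suc m" using n by (cases n) auto
    have "(cmod (orthonormal_OP M n z0))\<^sup>2 = Kf z0 (Suc m) - Kf z0 m"
      unfolding m x_eq Kf_Suc by simp
    also have "\<dots> \<ge> r * Kf z0 m" using step[of m] by (simp add: algebra_simps)
    moreover have "r * Kf z0 m \<ge> r * (1 + r) ^ m" using Kgrow[of m] rpos by (intro mult_left_mono) auto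
    ultimately show ?thesis unfolding m by simp
  qed
  have nz: "orthonormal_OP M n z0 \<noteq> 0" for n
  proof (cases "n = 0")
    case True then show ?thesis by (simp add: x_eq e0)
  next
    case False
    then have "r * (1 + r) ^ (n - 1) > 0" using rpos by simp
    then have "(cmod (orthonormal_OP M n z0))\<^sup>2 > 0" using bound[of n] False by linarith
    then show ?thesis by auto
  qed
  have lim: "liminf (\<lambda>n. ereal (cmod (orthonormal_OP M n z0) powr (1 / real n))) \<ge> ereal (sqrt (1 + r))"
  proof (rule liminf_part)
    show "d / D > 0" using dpos Dpos by simp
    show "sqrt (1 + r) > 0" using rpos by simp
    fix n :: nat assume n: "n \<ge> 1"
    have "(sqrt (1 + r) ^ (n - 1))\<^sup>2 = ((sqrt (1 + r)) ^ 2) ^ (n - 1)"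
      by (simp only: power_mult[symmetric] mult.commute)
    also have "\<dots> = (1 + r) ^ (n - 1)" using rpos by simp
    finally have "(d / D * sqrt (1 + r) ^ (n - 1))\<^sup>2 = r * (1 + r) ^ (n - 1)"
      unfolding r_def power_mult_distrib by simp
    then have "(d / D * sqrt (1 + r) ^ (n - 1))\<^sup>2 \<le> (cmod (orthonormal_OP M n z0))\<^sup>2"
      using bound[OF n] by simp
    then show "d / D * sqrt (1 + r) ^ (n - 1) \<le> cmod (orthonormal_OP M n z0)"
      by (rule power2_le_imp_le) simp
  qed
  have sq: "sqrt (1 + r) > 1" using rpos by simp
  show ?thesis using bound nz lim sq unfolding r_def by blast
qed


end
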